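(* Let $\Gamma\in\mathbb{R}^{p\times p}$ be a connected continuous-time interconnection, let $r\in\mathbb{R}^p$ satisfy $r^T\Gamma=0$, $r^T\mathbf 1=1$, and let $\Omega\in\mathbb{R}^{p\times p}$ be symmetric positive definite with $(\Gamma-\mathbf 1r^T)^T\Omega+\Omega(\Gamma-\mathbf 1r^T)=-I_p$. Then for every Riemann-integrable $Q:\mathbb{R}_{\ge0}\to\mathcal Q_n$, the solutions of $\dot x_i=Q_t\sum_{j\ne i}\gamma_{ij}(x_j-x_i)$, $i=1,\dots,p$, satisfy for all $t\ge0$ and all $i$ $$|x_i(t)-\bar x|\le\Big(\frac{\sigma_{\max}(\Omega)}{\sigma_{\min}(\Omega)}\sum_{j=1}^p|x_j(0)-\bar x|^2\Big)^{1/2},$$ where $\bar x:=(r^T\otimes I_n)\mathbf x(0)$ and $\mathbf x=[x_1^T\cdots x_p^T]^T$.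
   Context: $|\cdot|$ Euclidean norm; $\mathbf 1$ all-ones vector; $\otimes$ Kronecker product; $\sigma_{\max},\sigma_{\min}$ largest/smallest singular values; $\mathcal Q_n$ symmetric positive semidefinite $n\times n$ matrices. A continuous-time interconnection is $\Gamma=[\gamma_{ij}]$ with $\gamma_{ij}\ge0$ ($i\ne j$), $\gamma_{ii}=-\sum_{j\ne i}\gamma_{ij}$; its graph has directed edge $(n_i,n_j)$ iff $\gamma_{ij}>0$; connected means some node is reachable by a directed path from every other node. *)

theory Defs
  imports "HOL-Analysis.Analysis"
begin

definition ct_interconnection :: "real^'p^'p \<Rightarrow> bool" where
  "ct_interconnection G \<longleftrightarrow>
     (\<forall>i j. i \<noteq> j \<longrightarrow> G$i$j \<ge> 0) \<and>
     (\<forall>i. G$i$i = - (\<Sum>j\<in>UNIV - {i}. G$i$j))"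

definition ic_edge :: "real^'p^'p \<Rightarrow> 'p \<Rightarrow> 'p \<Rightarrow> bool" where
  "ic_edge G i j \<longleftrightarrow> G$i$j > 0"

definition ic_connected :: "real^'p^'p \<Rightarrow> bool" where
  "ic_connected G \<longleftrightarrow> (\<exists>k. \<forall>i. (ic_edge G)\<^sup>*\<^sup>* i k)"

definition sym_matrix :: "real^'n^'n \<Rightarrow> bool" where
  "sym_matrix A \<longleftrightarrow> transpose A = A"

definition pos_semidef :: "real^'n^'n \<Rightarrow> bool" where
  "pos_semidef A \<longleftrightarrow> sym_matrix A \<and> (\<forall>v. v \<bullet> (A *v v) \<ge> 0)"

definition pos_def :: "real^'n^'n \<Rightarrow> bool" where
  "pos_def A \<longleftrightarrow> sym_matrix A \<and> (\<forall>v. v \<noteq> 0 \<longrightarrow> v \<bullet> (A *v v) > 0)"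

definition singular_values :: "real^'n^'n \<Rightarrow> real set" where
  "singular_values A = {sqrt e | e. \<exists>v. v \<noteq> 0 \<and> (transpose A ** A) *v v = e *\<^sub>R v}"

definition sigma_max :: "real^'n^'n \<Rightarrow> real" where
  "sigma_max A = Max (singular_values A)"

definition sigma_min :: "real^'n^'n \<Rightarrow> real" where
  "sigma_min A = Min (singular_values A)"

definition riemann_integrable_on ::
    "(real \<Rightarrow> 'a::real_normed_vector) \<Rightarrow> real set \<Rightarrow> bool" where
  "riemann_integrable_on f S \<longleftrightarrow>
     (\<exists>I. \<forall>e>0. \<exists>\<delta>>0. \<forall>D. D tagged_division_of S \<and> (\<forall>(x,K)\<in>D. diameter K < \<delta>)
        \<longrightarrow> norm ((\<Sum>(x,K)\<in>D. Henstock_Kurzweil_Integration.content K *\<^sub>R f x) - I) < e)"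

end

theory Submission
  imports Defs
begin

lemma sym_inner_swap:
  fixes M :: "real^'n^'n"
  assumes "transpose M = M"
  shows "v \<bullet> (M *v w) = w \<bullet> (M *v v)"
proof -
  have "v \<bullet> (M *v w) = (v v* M) \<bullet> w" by (simp add: dot_lmul_matrix)
  also have "v v* M = M *v v" using vector_transpose_matrix[of v M] assms by simp
  finally show ?thesis by (simp add: inner_commute)
qed

lemma matvec_norm_le:
  fixes A :: "real^'n^'m"
  shows "norm (A *v x) \<le> real (CARD('m) * CARD('n)) * norm A * norm x"
proof -
  have "norm (A *v x) \<le> onorm ((*v) A) * norm x"
    using onorm [OF matrix_vector_mul_bounded_linear, of A x] by simp
  also have "onorm ((*v) A) \<le> (\<Sum>i\<in>UNIV. \<Sum>j\<in>UNIV. \<bar>A $ i $ j\<bar>)"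
    by (rule onorm_le_matrix_component_sum)
  also have "\<dots> \<le> (\<Sum>i\<in>(UNIV::'m set). \<Sum>j\<in>(UNIV::'n set). norm A)"
    apply (intro sum_mono)
    subgoal for i j by (meson component_le_norm_cart Finite_Cartesian_Product.norm_nth_le order_trans)
    done
  also have "\<dots> = real (CARD('m) * CARD('n)) * norm A" by simp
  finally show ?thesis by (simp add: mult_right_mono)
qed

lemma rayleigh_min_eigen:
  fixes M :: "real^'n^'n"
  assumes sym: "transpose M = M"
  shows "\<exists>w \<mu>. w \<noteq> 0 \<and> M *v w = \<mu> *\<^sub>R w \<and> (\<forall>v. \<mu> * (v \<bullet> v) \<le> v \<bullet> (M *v v))"
proof -
  define f where "f v = v \<bullet> (M *v v)" for v :: "real^'n"
  have cont: "continuous_on (sphere 0 1) f"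
    unfolding f_def by (intro continuous_intros)
  have ne: "sphere (0::real^'n) 1 \<noteq> {}" by simp
  obtain w where w: "w \<in> sphere 0 1" and wmin: "\<And>v. v \<in> sphere 0 1 \<Longrightarrow> f w \<le> f v"
    using continuous_attains_inf[OF compact_sphere ne cont] by blast
  define \<mu> where "\<mu> = f w"
  have nw: "norm w = 1" using w by simp
  have ww: "w \<bullet> w = 1" using nw by (simp add: dot_square_norm)
  have lb: "\<mu> * (v \<bullet> v) \<le> v \<bullet> (M *v v)" for v
  proof (cases "v = 0")
    case True then show ?thesis by simp
  next
    case False
    let ?u = "(1 / norm v) *\<^sub>R v"
    have "?u \<in> sphere 0 1" using False by simp
    then have "\<mu> \<le> f ?u" using wmin \<mu>_def by simp
    also have "f ?u = (v \<bullet> (M *v v)) / (norm v)^2"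
      unfolding f_def by (simp add: matrix_vector_mult_scaleR power2_eq_square)
    finally have "\<mu> * (norm v)^2 \<le> v \<bullet> (M *v v)"
      using False by (simp add: field_simps)
    then show ?thesis by (simp add: dot_square_norm)
  qed
  define z where "z = M *v w - \<mu> *\<^sub>R w"
  define c where "c = z \<bullet> (M *v z) - \<mu> * (z \<bullet> z)"
  have key: "0 \<le> - 2 * s * (z \<bullet> z) + s^2 * c" for s
  proof -
    let ?v = "w - s *\<^sub>R z"
    have e1: "M *v ?v = M *v w - s *\<^sub>R (M *v z)"
      by (simp add: matrix_vector_mult_diff_distrib matrix_vector_mult_scaleR)
    have e2: "?v \<bullet> (M *v ?v) = w \<bullet> (M *v w) - s * (w \<bullet> (M *v z)) - s * (z \<bullet> (M *v w)) + s^2 * (z \<bullet> (M *v z))"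
      unfolding e1 by (simp add: inner_diff_left inner_diff_right algebra_simps power2_eq_square)
    have e3: "?v \<bullet> ?v = w \<bullet> w - s * (w \<bullet> z) - s * (z \<bullet> w) + s^2 * (z \<bullet> z)"
      by (simp add: inner_diff_left inner_diff_right algebra_simps power2_eq_square)
    have "0 \<le> ?v \<bullet> (M *v ?v) - \<mu> * (?v \<bullet> ?v)" using lb[of ?v] by simp
    also have "?v \<bullet> (M *v ?v) - \<mu> * (?v \<bullet> ?v) =
        (w \<bullet> (M *v w) - \<mu> * (w \<bullet> w)) - s * (w \<bullet> (M *v z)) - s * (z \<bullet> (M *v w))
          + s * \<mu> * (z \<bullet> w) + s * \<mu> * (w \<bullet> z) + s^2 * c"
      unfolding c_def e2 e3 by (simp add: algebra_simps)
    also have "w \<bullet> (M *v z) = z \<bullet> (M *v w)" by (rule sym_inner_swap[OF sym])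
    also have "w \<bullet> (M *v w) - \<mu> * (w \<bullet> w) = 0" using ww \<mu>_def f_def by simp
    also have "z \<bullet> (M *v w) = z \<bullet> z + \<mu> * (z \<bullet> w)"
      unfolding z_def by (simp add: inner_diff_right algebra_simps) 
    finally show ?thesis by (simp add: algebra_simps inner_commute[of w z])
  qed
  have "z \<bullet> z \<le> 0"
  proof (cases "c \<le> 0")
    case True
    with key[of 1] show ?thesis by simp
  next
    case False
    have "0 \<le> - 2 * ((z \<bullet> z)/c) * (z \<bullet> z) + ((z \<bullet> z)/c)^2 * c" by (rule key)
    also have "\<dots> = - ((z \<bullet> z)^2 / c)" using False
      by (simp add: power2_eq_square)
    finally have "(z \<bullet> z)^2 / c \<le> 0" by linarith
    then have "(z \<bullet> z)^2 \<le> 0" using False by (simp add: divide_le_0_iff)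
    then have "(z \<bullet> z)^2 = 0" using zero_le_power2[of "z \<bullet> z"] by linarith
    then show ?thesis by simp
  qed
  then have "z = 0" by (metis inner_ge_zero inner_eq_zero_iff order_antisym)
  then have "M *v w = \<mu> *\<^sub>R w" unfolding z_def by simp
  moreover have "w \<noteq> 0" using nw by auto
  ultimately show ?thesis using lb by blast
qed

lemma finite_eigen_sym:
  fixes M :: "real^'n^'n"
  assumes sym: "transpose M = M"
  shows "finite {e. \<exists>v. v \<noteq> 0 \<and> M *v v = e *\<^sub>R v}"
proof -
  define E where "E = {e. \<exists>v. v \<noteq> 0 \<and> M *v v = e *\<^sub>R v}"
  define f where "f e = (SOME v. v \<noteq> 0 \<and> M *v v = e *\<^sub>R v)" for e
  have f: "f e \<noteq> 0 \<and> M *v f e = e *\<^sub>R f e" if "e \<in> E" for e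
    using that unfolding E_def f_def by (metis (mono_tags, lifting) mem_Collect_eq someI_ex)
  have inj: "inj_on f E"
  proof (rule inj_onI)
    fix a b assume "a \<in> E" "b \<in> E" "f a = f b"
    then have "a *\<^sub>R f a = b *\<^sub>R f a" "f a \<noteq> 0" using f by metis+
    then show "a = b" by (simp add: scaleR_cancel_right)
  qed
  have orth: "pairwise orthogonal (f ` E)"
    unfolding pairwise_def
  proof (clarify)
    fix a b assume a: "a \<in> E" and b: "b \<in> E" and ne: "f a \<noteq> f b"
    then have "a \<noteq> b" by auto
    have "a * (f a \<bullet> f b) = f b \<bullet> (M *v f a)" using f[OF a] by (simp add: inner_commute[of "f a" "f b"])
    also have "\<dots> = f a \<bullet> (M *v f b)" by (rule sym_inner_swap[OF sym])
    also have "\<dots> = b * (f a \<bullet> f b)" using f[OF b] by simp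
    finally have "(a - b) * (f a \<bullet> f b) = 0" by (simp add: algebra_simps)
    then show "orthogonal (f a) (f b)" using \<open>a \<noteq> b\<close> by (simp add: orthogonal_def)
  qed
  have "0 \<notin> f ` E" using f by auto
  then have "independent (f ` E)" using pairwise_orthogonal_independent orth by blast
  then have "finite (f ` E)" by (rule independent_imp_finite)
  then have "finite E" using finite_imageD inj by blast
  then show ?thesis unfolding E_def .
qed

lemma sigma_bounds:
  fixes \<Omega> :: "real^'n^'n"
  assumes pd: "pos_def \<Omega>"
  shows "0 < sigma_min \<Omega>" "\<And>w. sigma_min \<Omega> * (w \<bullet> w) \<le> w \<bullet> (\<Omega> *v w)"
    "\<And>w. w \<bullet> (\<Omega> *v w) \<le> sigma_max \<Omega> * (w \<bullet> w)"
proof -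
  have sym: "transpose \<Omega> = \<Omega>" using pd by (simp add: pos_def_def sym_matrix_def)
  have pos: "\<And>v. v \<noteq> 0 \<Longrightarrow> v \<bullet> (\<Omega> *v v) > 0" using pd by (simp add: pos_def_def)
  define E where "E = {e. \<exists>v. v \<noteq> 0 \<and> (transpose \<Omega> ** \<Omega>) *v v = e *\<^sub>R v}"
  have SE: "singular_values \<Omega> = sqrt ` E" unfolding singular_values_def E_def by auto
  have sym2: "transpose (transpose \<Omega> ** \<Omega>) = transpose \<Omega> ** \<Omega>"
    by (simp add: matrix_transpose_mul)
  have finS: "finite (singular_values \<Omega>)"
    unfolding SE E_def using finite_eigen_sym[OF sym2] by simp
  have Spos: "s > 0" if sS: "s \<in> singular_values \<Omega>" for s
  proof -
    obtain e v where ev: "s = sqrt e" "v \<noteq> 0" "(transpose \<Omega> ** \<Omega>) *v v = e *\<^sub>R v"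
      using sS unfolding SE E_def by blast
    have "e * (v \<bullet> v) = v \<bullet> (\<Omega> *v (\<Omega> *v v))"
      using ev(3) sym by (simp add: matrix_vector_mul_assoc[symmetric])
    also have "\<dots> = (\<Omega> *v v) \<bullet> (\<Omega> *v v)"
      using sym_inner_swap[OF sym, of v "\<Omega> *v v"] by simp
    finally have eq: "e * (v \<bullet> v) = (\<Omega> *v v) \<bullet> (\<Omega> *v v)" .
    have "\<Omega> *v v \<noteq> 0" using pos[OF ev(2)] by auto
    then have "e * (v \<bullet> v) > 0" using eq by simp
    moreover have "v \<bullet> v > 0" using ev(2) by simp
    ultimately have "e > 0" by (simp add: zero_less_mult_iff)
    then show ?thesis using ev(1) by simp
  qed
  have inS: "lam \<in> singular_values \<Omega>" if "w \<noteq> 0" "\<Omega> *v w = lam *\<^sub>R w" "lam > 0" for w lam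
  proof -
    have "(transpose \<Omega> ** \<Omega>) *v w = (lam^2) *\<^sub>R w"
      using that sym by (simp add: matrix_vector_mul_assoc[symmetric] matrix_vector_mult_scaleR power2_eq_square)
    then have "lam^2 \<in> E" using that unfolding E_def by blast
    then show ?thesis unfolding SE using that(3) by force
  qed
  obtain w \<mu> where w: "w \<noteq> 0" "\<Omega> *v w = \<mu> *\<^sub>R w" and lbw: "\<And>v. \<mu> * (v \<bullet> v) \<le> v \<bullet> (\<Omega> *v v)"
    using rayleigh_min_eigen[OF sym] by blast
  have "\<mu> * (w \<bullet> w) > 0" using pos[OF w(1)] w(2) by simp
  then have mupos: "\<mu> > 0" using w(1) inner_ge_zero[of w] by (auto simp: zero_less_mult_iff)
  have muS: "\<mu> \<in> singular_values \<Omega>" using inS[OF w mupos] .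
  have symn: "transpose (- \<Omega>) = - \<Omega>" using sym by (simp add: transpose_def vec_eq_iff)
  obtain u \<nu> where u: "u \<noteq> 0" "(- \<Omega>) *v u = \<nu> *\<^sub>R u" and lbu: "\<And>v. \<nu> * (v \<bullet> v) \<le> v \<bullet> ((- \<Omega>) *v v)"
    using rayleigh_min_eigen[OF symn] by blast
  have neg: "(- \<Omega>) *v v = - (\<Omega> *v v)" for v
    by (simp add: vec_eq_iff matrix_vector_mult_def sum_negf)
  have u2: "\<Omega> *v u = (- \<nu>) *\<^sub>R u" using u(2) neg[of u] by (metis minus_minus scaleR_minus_left)
  have ubu: "v \<bullet> (\<Omega> *v v) \<le> (- \<nu>) * (v \<bullet> v)" for v using lbu[of v] neg[of v] by simp
  have "(- \<nu>) * (u \<bullet> u) > 0" using pos[OF u(1)] u2 by simp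
  then have nupos: "- \<nu> > 0" using u(1) inner_ge_zero[of u] by (auto simp: zero_less_mult_iff mult_less_0_iff)
  have nuS: "- \<nu> \<in> singular_values \<Omega>" using inS[OF u(1) u2 nupos] .
  have "sigma_min \<Omega> \<in> singular_values \<Omega>" unfolding sigma_min_def
    using finS muS by (intro Min_in) auto
  then show "0 < sigma_min \<Omega>" using Spos by blast
  have smin: "sigma_min \<Omega> \<le> \<mu>" unfolding sigma_min_def using finS muS by simp
  have smax: "- \<nu> \<le> sigma_max \<Omega>" unfolding sigma_max_def using finS nuS by simp
  show "sigma_min \<Omega> * (v \<bullet> v) \<le> v \<bullet> (\<Omega> *v v)" for v
    using lbw[of v] mult_right_mono[OF smin, of "v \<bullet> v"] by simp
  show "v \<bullet> (\<Omega> *v v) \<le> sigma_max \<Omega> * (v \<bullet> v)" for v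
    using ubu[of v] mult_right_mono[OF smax, of "v \<bullet> v"] by simp
qed

lemma uniform_tdiv:
  fixes h :: real and N :: nat and \<tau> :: "nat \<Rightarrow> real"
  assumes h: "h > 0" and Npos: "N > 0" and tau: "\<And>k. k < N \<Longrightarrow> \<tau> k \<in> {real k * h .. real (Suc k) * h}"
  shows "((\<lambda>k. (\<tau> k, {real k * h .. real (Suc k) * h})) ` {..<N}) tagged_division_of {0 .. real N * h}"
proof -
  have sub: "{real k * h .. real (Suc k) * h} \<subseteq> {0 .. real N * h}" if "k < N" for k
  proof -
    have "0 \<le> real k * h" using h by simp
    moreover have "real (Suc k) * h \<le> real N * h" using h that by (intro mult_right_mono) auto
    ultimately show ?thesis by auto
  qed
  show ?thesis
proof (rule tagged_division_ofI)
  let ?D = "(\<lambda>k. (\<tau> k, {real k * h .. real (Suc k) * h})) ` {..<N}"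
  show "finite ?D" by simp
  show "x \<in> K" if "(x, K) \<in> ?D" for x K using that tau by auto
  show "K \<subseteq> {0 .. real N * h}" if "(x, K) \<in> ?D" for x K
  proof -
    from that obtain k where "k < N" "K = {real k * h .. real (Suc k) * h}" by auto
    then show ?thesis using sub by simp
  qed
  show "\<exists>a b. K = cbox a b" if "(x, K) \<in> ?D" for x K using that by auto
  show "interior K1 \<inter> interior K2 = {}"
    if th: "(x1, K1) \<in> ?D" "(x2, K2) \<in> ?D" "(x1, K1) \<noteq> (x2, K2)" for x1 K1 x2 K2
  proof -
    obtain k1 k2 where k: "k1 < N" "k2 < N" "x1 = \<tau> k1" "K1 = {real k1 * h .. real (Suc k1) * h}"
      "x2 = \<tau> k2" "K2 = {real k2 * h .. real (Suc k2) * h}" using th(1,2) by auto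
    have "k1 \<noteq> k2" using th(3) k by auto
    then have "real (Suc k1) \<le> real k2 \<or> real (Suc k2) \<le> real k1" by linarith
    then have "real (Suc k1) * h \<le> real k2 * h \<or> real (Suc k2) * h \<le> real k1 * h"
      using h by (meson less_eq_real_def mult_right_mono)
    then show ?thesis using k by auto
  qed
  show "\<Union>{K. \<exists>x. (x, K) \<in> ?D} = {0 .. real N * h}"
  proof
    show "\<Union>{K. \<exists>x. (x, K) \<in> ?D} \<subseteq> {0 .. real N * h}"
    proof (rule Union_least)
      fix K assume "K \<in> {K. \<exists>x. (x, K) \<in> ?D}"
      then obtain k where "k < N" "K = {real k * h .. real (Suc k) * h}" by auto
      then show "K \<subseteq> {0 .. real N * h}" using sub by simp
    qed
    show "{0 .. real N * h} \<subseteq> \<Union>{K. \<exists>x. (x, K) \<in> ?D}"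
    proof
      fix y assume y: "y \<in> {0 .. real N * h}"
      have "N > 0" by (rule Npos)
      define k where "k = (if y = real N * h then N - 1 else nat \<lfloor>y / h\<rfloor>)"
      have kN: "k < N" and ky: "real k * h \<le> y" "y \<le> real (Suc k) * h"
      proof -
        show "k < N"
        proof (cases "y = real N * h")
          case True then show ?thesis using \<open>N > 0\<close> k_def by simp
        next
          case False
          then have "y < real N * h" using y by simp
          then have "y / h < real N" using h by (simp add: pos_divide_less_eq)
          moreover have "of_int \<lfloor>y / h\<rfloor> \<le> y / h" by linarith
          ultimately have "of_int \<lfloor>y / h\<rfloor> < (of_nat N :: real)" by linarith
          then have "\<lfloor>y / h\<rfloor> < int N" by linarith
          then show ?thesis using k_def False \<open>N > 0\<close> by simp
        qed
        have "real k * h \<le> y \<and> y \<le> real (Suc k) * h"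
        proof (cases "y = real N * h")
          case True then show ?thesis
          proof -
            have "real k = real N - 1" using True k_def \<open>N > 0\<close> by (simp add: of_nat_diff)
            then show ?thesis using True h by (simp add: algebra_simps)
          qed
        next
          case False
          have y0: "0 \<le> y / h" using y h by simp
          have "real k = of_int \<lfloor>y / h\<rfloor>" using k_def False y0 by simp
          moreover have "of_int \<lfloor>y / h\<rfloor> \<le> y / h" "y / h < of_int \<lfloor>y / h\<rfloor> + 1" by linarith+
          ultimately have "real k \<le> y / h" "y / h \<le> real k + 1" by linarith+
          then have "real k * h \<le> (y / h) * h" "(y / h) * h \<le> (real k + 1) * h"
            using h by (simp_all add: pos_le_divide_eq pos_divide_le_eq)
          moreover have "(real k + 1) * h = real (Suc k) * h" by simp
          moreover have "(y / h) * h = y" using h by simp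
          ultimately show ?thesis by linarith
        qed
        then show "real k * h \<le> y" "y \<le> real (Suc k) * h" by auto
      qed
      have "(\<tau> k, {real k * h .. real (Suc k) * h}) \<in> ?D" using kN by blast
      moreover have "y \<in> {real k * h .. real (Suc k) * h}" using ky by simp
      ultimately show "y \<in> \<Union>{K. \<exists>x. (x, K) \<in> ?D}" by blast
    qed
  qed
qed
qed

lemma riemann_bounded:
  fixes f :: "real \<Rightarrow> 'a::real_normed_vector"
  assumes R: "riemann_integrable_on f {0..T}" and T: "T > 0"
  shows "\<exists>B. \<forall>y\<in>{0..T}. norm (f y) \<le> B"
proof -
  obtain I where I: "\<forall>e>0. \<exists>\<delta>>0. \<forall>D. D tagged_division_of {0..T} \<and> (\<forall>(x,K)\<in>D. diameter K < \<delta>)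
        \<longrightarrow> norm ((\<Sum>(x,K)\<in>D. Henstock_Kurzweil_Integration.content K *\<^sub>R f x) - I) < e"
    using R unfolding riemann_integrable_on_def by blast
  obtain \<delta> where \<delta>: "\<delta> > 0" and Hd: "\<And>D. D tagged_division_of {0..T} \<Longrightarrow> (\<forall>(x,K)\<in>D. diameter K < \<delta>)
        \<Longrightarrow> norm ((\<Sum>(x,K)\<in>D. Henstock_Kurzweil_Integration.content K *\<^sub>R f x) - I) < 1"
    using I[rule_format, of 1] by auto
  obtain N :: nat where N: "T / \<delta> < real N" using reals_Archimedean2 by blast
  have "T / \<delta> > 0" using T \<delta> by simp
  then have Npos: "N > 0" using N by linarith
  define h where "h = T / real N"
  have hpos: "h > 0" using T Npos h_def by simp
  have Nh: "real N * h = T" using Npos h_def by simp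
  have hd: "h < \<delta>" using N \<delta> Npos unfolding h_def by (simp add: divide_less_eq mult.commute)
  define D where "D \<tau> = (\<lambda>k. (\<tau> k, {real k * h .. real (Suc k) * h})) ` {..<N}" for \<tau> :: "nat \<Rightarrow> real"
  have tdiv: "D \<tau> tagged_division_of {0..T}" if "\<And>k. k < N \<Longrightarrow> \<tau> k \<in> {real k * h .. real (Suc k) * h}" for \<tau>
    using uniform_tdiv[OF hpos Npos that] Nh unfolding D_def by simp
  have diam: "\<forall>(x,K)\<in>D \<tau>. diameter K < \<delta>" for \<tau>
  proof (clarify)
    fix x K assume "(x, K) \<in> D \<tau>"
    then obtain k where "K = {real k * h .. real (Suc k) * h}" unfolding D_def by auto
    moreover have "real k * h \<le> real (Suc k) * h" using hpos by simp
    ultimately have "diameter K = h" by (simp add: algebra_simps)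
    then show "diameter K < \<delta>" using hd by simp
  qed
  have inj: "inj_on (\<lambda>k. (\<tau> k, {real k * h .. real (Suc k) * h})) {..<N}" for \<tau> :: "nat \<Rightarrow> real"
  proof (rule inj_onI)
    fix a b assume "a \<in> {..<N}" "b \<in> {..<N}"
      and eq: "(\<tau> a, {real a * h .. real (Suc a) * h}) = (\<tau> b, {real b * h .. real (Suc b) * h})"
    have "real a * h \<le> real (Suc a) * h" "real b * h \<le> real (Suc b) * h" using hpos by simp_all
    then have "real a * h = real b * h" using eq by auto
    then show "a = b" using hpos by simp
  qed
  have sumeq: "(\<Sum>(x,K)\<in>D \<tau>. Henstock_Kurzweil_Integration.content K *\<^sub>R f x) = (\<Sum>k<N. h *\<^sub>R f (\<tau> k))" for \<tau>
    unfolding D_def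
    apply (subst sum.reindex[OF inj])
    apply (rule sum.cong)
     apply (use hpos in \<open>auto simp: algebra_simps\<close>)
    done
  define B where "B = (\<Sum>j<N. norm (f (real j * h))) + 2 / h"
  have "norm (f y) \<le> B" if y: "y \<in> {0..T}" for y
  proof -
    define \<tau>0 where "\<tau>0 k = real k * h" for k
    have g0: "\<tau>0 k \<in> {real k * h .. real (Suc k) * h}" if "k < N" for k
      unfolding \<tau>0_def using hpos by simp
    have "y \<in> \<Union>{K. \<exists>x. (x,K) \<in> D \<tau>0}" using tdiv[OF g0] y by (simp add: tagged_division_of)
    then obtain k where k: "k < N" "y \<in> {real k * h .. real (Suc k) * h}" unfolding D_def by auto
    define \<tau>1 where "\<tau>1 = \<tau>0(k := y)"
    have g1: "\<tau>1 j \<in> {real j * h .. real (Suc j) * h}" if "j < N" for j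
      unfolding \<tau>1_def using g0[OF that] k by auto
    have n0: "norm ((\<Sum>j<N. h *\<^sub>R f (\<tau>0 j)) - I) < 1" using Hd[OF tdiv[OF g0] diam] sumeq by simp
    have n1: "norm ((\<Sum>j<N. h *\<^sub>R f (\<tau>1 j)) - I) < 1" using Hd[OF tdiv[OF g1] diam] sumeq by simp
    have "(\<Sum>j<N. h *\<^sub>R f (\<tau>1 j)) - (\<Sum>j<N. h *\<^sub>R f (\<tau>0 j))
        = (\<Sum>j<N. (if j = k then h *\<^sub>R (f y - f (\<tau>0 k)) else 0))"
      unfolding sum_subtractf[symmetric] \<tau>1_def by (intro sum.cong) (auto simp: scaleR_diff_right)
    also have "\<dots> = h *\<^sub>R (f y - f (\<tau>0 k))" using k(1) by simp
    finally have dif: "(\<Sum>j<N. h *\<^sub>R f (\<tau>1 j)) - (\<Sum>j<N. h *\<^sub>R f (\<tau>0 j)) = h *\<^sub>R (f y - f (\<tau>0 k))" .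
    have "norm (h *\<^sub>R (f y - f (\<tau>0 k))) < 2"
      using n0 n1 dif norm_triangle_ineq4[of "(\<Sum>j<N. h *\<^sub>R f (\<tau>1 j)) - I" "(\<Sum>j<N. h *\<^sub>R f (\<tau>0 j)) - I"]
      by simp
    then have "h * norm (f y - f (\<tau>0 k)) < 2" using hpos by simp
    then have d2: "norm (f y - f (\<tau>0 k)) < 2 / h" using hpos by (simp add: less_divide_eq mult.commute)
    have "norm (f (\<tau>0 k)) \<le> (\<Sum>j<N. norm (f (real j * h)))"
      unfolding \<tau>0_def using k(1) by (intro member_le_sum) auto
    moreover have "norm (f y) \<le> norm (f (\<tau>0 k)) + norm (f y - f (\<tau>0 k))"
      by (metis add.commute diff_add_cancel norm_triangle_ineq)
    ultimately show ?thesis unfolding B_def using d2 by linarith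
  qed
  then show ?thesis by blast
qed

definition Bf :: "real^'p^'p \<Rightarrow> ('p \<Rightarrow> real^'n) \<Rightarrow> ('p \<Rightarrow> real^'n) \<Rightarrow> real" where
  "Bf W a b = (\<Sum>i\<in>UNIV. \<Sum>j\<in>UNIV. W$i$j * (a i \<bullet> b j))"

lemma matvec_sum:
  fixes Q :: "real^'n^'m"
  shows "Q *v (\<Sum>j\<in>S. f j) = (\<Sum>j\<in>S. Q *v f j)"
proof (induction S rule: infinite_finite_induct)
  case (infinite A) then show ?case by simp
next
  case empty then show ?case by simp
next
  case (insert x F) then show ?case by (simp add: matrix_vector_right_distrib)
qed

lemma rowsum_zero:
  assumes "ct_interconnection G"
  shows "(\<Sum>j\<in>UNIV. G$i$j) = 0"
proof -
  have "(\<Sum>j\<in>UNIV. G$i$j) = G$i$i + (\<Sum>j\<in>UNIV - {i}. G$i$j)"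
    by (simp add: sum.remove[of UNIV i])
  then show ?thesis using assms unfolding ct_interconnection_def by simp
qed

lemma rowsum_eq:
  fixes y :: "'p::finite \<Rightarrow> 'a::real_vector" and G :: "real^'p^'p"
  assumes "ct_interconnection G"
  shows "(\<Sum>j\<in>UNIV-{i}. G$i$j *\<^sub>R (y j - y i)) = (\<Sum>j\<in>UNIV. G$i$j *\<^sub>R y j)"
proof -
  have d: "G$i$i = - (\<Sum>j\<in>UNIV - {i}. G$i$j)" using assms unfolding ct_interconnection_def by simp
  have "(\<Sum>j\<in>UNIV-{i}. G$i$j *\<^sub>R (y j - y i)) = (\<Sum>j\<in>UNIV-{i}. G$i$j *\<^sub>R y j) - (\<Sum>j\<in>UNIV-{i}. G$i$j) *\<^sub>R y i"
    by (simp add: scaleR_diff_right sum_subtractf scaleR_sum_left)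
  also have "\<dots> = (\<Sum>j\<in>UNIV-{i}. G$i$j *\<^sub>R y j) + G$i$i *\<^sub>R y i" using d by simp
  also have "\<dots> = (\<Sum>j\<in>UNIV. G$i$j *\<^sub>R y j)"
    by (simp add: sum.remove[of UNIV i] add.commute)
  finally show ?thesis .
qed

lemma dissip:
  fixes W A :: "real^'p^'p" and Q :: "real^'n^'n" and e :: "'p \<Rightarrow> real^'n"
  assumes sW: "transpose W = W" and sQ: "transpose Q = Q" and psd: "\<And>v. v \<bullet> (Q *v v) \<ge> 0"
    and lyap: "transpose A ** W + W ** A = - mat 1"
  shows "Bf W e (\<lambda>j. Q *v (\<Sum>k\<in>UNIV. A$j$k *\<^sub>R e k)) \<le> 0"
proof -
  define c where "c i k = e i \<bullet> (Q *v e k)" for i k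
  have csym: "c i k = c k i" for i k unfolding c_def by (rule sym_inner_swap[OF sQ])
  have B1: "Bf W e (\<lambda>j. Q *v (\<Sum>k\<in>UNIV. A$j$k *\<^sub>R e k)) = (\<Sum>i\<in>UNIV. \<Sum>k\<in>UNIV. (W**A)$i$k * c i k)"
  proof -
    have "Bf W e (\<lambda>j. Q *v (\<Sum>k\<in>UNIV. A$j$k *\<^sub>R e k))
        = (\<Sum>i\<in>UNIV. \<Sum>j\<in>UNIV. \<Sum>k\<in>UNIV. W$i$j * A$j$k * c i k)"
      unfolding Bf_def c_def
      by (simp add: matvec_sum matrix_vector_mult_scaleR inner_sum_right sum_distrib_left mult.assoc)
    also have "\<dots> = (\<Sum>i\<in>UNIV. \<Sum>k\<in>UNIV. \<Sum>j\<in>UNIV. W$i$j * A$j$k * c i k)"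
      by (rule sum.cong[OF refl], rule sum.swap)
    also have "\<dots> = (\<Sum>i\<in>UNIV. \<Sum>k\<in>UNIV. (W**A)$i$k * c i k)"
      by (simp add: matrix_matrix_mult_def sum_distrib_right)
    finally show ?thesis .
  qed
  have B2: "(\<Sum>i\<in>UNIV. \<Sum>k\<in>UNIV. (transpose A ** W)$i$k * c i k) = (\<Sum>i\<in>UNIV. \<Sum>k\<in>UNIV. (W**A)$i$k * c i k)"
  proof -
    have ent: "(transpose A ** W)$i$k = (W**A)$k$i" for i k
    proof -
      have "(transpose A ** W)$i$k = (\<Sum>j\<in>UNIV. A$j$i * W$j$k)"
        by (simp add: matrix_matrix_mult_def transpose_def)
      also have "\<dots> = (\<Sum>j\<in>UNIV. W$k$j * A$j$i)"
      proof (rule sum.cong[OF refl])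
        fix j
        have "W$j$k = W$k$j" using sW by (metis transpose_def vec_lambda_beta)
        then show "A$j$i * W$j$k = W$k$j * A$j$i" by simp
      qed
      also have "\<dots> = (W**A)$k$i" by (simp add: matrix_matrix_mult_def)
      finally show ?thesis .
    qed
    have "(\<Sum>i\<in>UNIV. \<Sum>k\<in>UNIV. (transpose A ** W)$i$k * c i k) = (\<Sum>i\<in>UNIV. \<Sum>k\<in>UNIV. (W**A)$k$i * c k i)"
      using ent csym by simp
    also have "\<dots> = (\<Sum>k\<in>UNIV. \<Sum>i\<in>UNIV. (W**A)$k$i * c k i)" by (rule sum.swap)
    finally show ?thesis .
  qed
  have "2 * Bf W e (\<lambda>j. Q *v (\<Sum>k\<in>UNIV. A$j$k *\<^sub>R e k))
      = (\<Sum>i\<in>UNIV. \<Sum>k\<in>UNIV. (transpose A ** W + W ** A)$i$k * c i k)"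
    using B1 B2 by (simp add: distrib_right sum.distrib)
  also have "\<dots> = (\<Sum>i\<in>UNIV. \<Sum>k\<in>UNIV. - ((if i = k then 1 else 0) * c i k))"
    unfolding lyap by (simp add: mat_def)
  also have "\<dots> = - (\<Sum>i\<in>UNIV. c i i)"
  proof -
    have "(\<Sum>k\<in>UNIV. (if i = k then 1 else 0) * c i k) = c i i" for i
    proof -
      have eq: "(\<lambda>k. (if i = k then 1 else 0) * c i k) = (\<lambda>k. if i = k then c i k else 0)" by auto
      show ?thesis unfolding eq by (simp add: sum.delta)
    qed
    then show ?thesis by (simp add: sum_negf)
  qed
  also have "\<dots> \<le> 0" unfolding c_def using psd by (simp add: sum_nonneg)
  finally show ?thesis by simp
qed

lemma Bf_bound:
  fixes W :: "real^'p^'p" and a b :: "'p \<Rightarrow> real^'n"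
  assumes "\<And>i. norm (a i) \<le> \<alpha>" "\<And>j. norm (b j) \<le> \<beta>"
  shows "\<bar>Bf W a b\<bar> \<le> (\<Sum>i\<in>UNIV. \<Sum>j\<in>UNIV. \<bar>W$i$j\<bar>) * \<alpha> * \<beta>"
proof -
  have ab: "\<bar>a i \<bullet> b j\<bar> \<le> \<alpha> * \<beta>" for i j
  proof -
    have "\<bar>a i \<bullet> b j\<bar> \<le> norm (a i) * norm (b j)" by (rule Cauchy_Schwarz_ineq2)
    also have "\<dots> \<le> \<alpha> * \<beta>"
      using assms(1)[of i] assms(2)[of j] by (intro mult_mono) (auto intro: order_trans[OF norm_ge_zero])
    finally show ?thesis .
  qed
  have "\<bar>Bf W a b\<bar> \<le> (\<Sum>i\<in>UNIV. \<Sum>j\<in>UNIV. \<bar>W$i$j * (a i \<bullet> b j)\<bar>)"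
    unfolding Bf_def by (rule order_trans[OF sum_abs]) (intro sum_mono sum_abs)
  also have "\<dots> \<le> (\<Sum>i\<in>UNIV. \<Sum>j\<in>UNIV. \<bar>W$i$j\<bar> * (\<alpha> * \<beta>))"
    by (intro sum_mono) (simp add: abs_mult ab mult_left_mono)
  also have "\<dots> = (\<Sum>i\<in>UNIV. \<Sum>j\<in>UNIV. \<bar>W$i$j\<bar>) * \<alpha> * \<beta>"
    by (simp add: sum_distrib_right mult.assoc)
  finally show ?thesis .
qed

lemma Bf_sym:
  fixes W :: "real^'p^'p" and a b :: "'p \<Rightarrow> real^'n"
  assumes sW: "transpose W = W"
  shows "Bf W b a = Bf W a b"
proof -
  have w: "W$j$i = W$i$j" for i j using sW by (metis transpose_def vec_lambda_beta)
  have "Bf W b a = (\<Sum>j\<in>UNIV. \<Sum>i\<in>UNIV. W$i$j * (a i \<bullet> b j))"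
    unfolding Bf_def using w by (simp add: inner_commute)
  also have "\<dots> = Bf W a b" unfolding Bf_def by (rule sum.swap)
  finally show ?thesis .
qed

lemma Bf_add_left: "Bf W (\<lambda>i. a i + d i) g = Bf W a g + Bf W d g"
  unfolding Bf_def by (simp add: inner_add_left distrib_left sum.distrib)
lemma Bf_add_right: "Bf W g (\<lambda>i. a i + d i) = Bf W g a + Bf W g d"
  unfolding Bf_def by (simp add: inner_add_right distrib_left sum.distrib)
lemma Bf_diff_left: "Bf W (\<lambda>i. a i - d i) g = Bf W a g - Bf W d g"
  unfolding Bf_def by (simp add: inner_diff_left right_diff_distrib sum_subtractf)

lemma Bf_expand:
  fixes W :: "real^'p^'p" and a d :: "'p \<Rightarrow> real^'n"
  assumes sW: "transpose W = W"
  shows "Bf W (\<lambda>i. a i + d i) (\<lambda>i. a i + d i) = Bf W a a + 2 * Bf W a d + Bf W d d"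
  using Bf_sym[OF sW, of d a] by (simp add: Bf_add_left Bf_add_right)

lemma Bf_coords:
  fixes W :: "real^'p^'p" and a :: "'p \<Rightarrow> real^'n"
  shows "Bf W a a = (\<Sum>k\<in>UNIV. (\<chi> i. a i $ k) \<bullet> (W *v (\<chi> i. a i $ k)))"
proof -
  have "Bf W a a = (\<Sum>i\<in>UNIV. \<Sum>j\<in>UNIV. \<Sum>k\<in>UNIV. W$i$j * (a i $ k * a j $ k))"
    unfolding Bf_def by (simp add: inner_vec_def sum_distrib_left)
  also have "\<dots> = (\<Sum>i\<in>UNIV. \<Sum>k\<in>UNIV. \<Sum>j\<in>UNIV. W$i$j * (a i $ k * a j $ k))"
    by (rule sum.cong[OF refl], rule sum.swap)
  also have "\<dots> = (\<Sum>k\<in>UNIV. \<Sum>i\<in>UNIV. \<Sum>j\<in>UNIV. W$i$j * (a i $ k * a j $ k))"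
    by (rule sum.swap)
  also have "\<dots> = (\<Sum>k\<in>UNIV. (\<chi> i. a i $ k) \<bullet> (W *v (\<chi> i. a i $ k)))"
    by (simp add: inner_vec_def matrix_vector_mult_def sum_distrib_left mult_ac)
  finally show ?thesis .
qed

lemma Bf_sandwich:
  fixes W :: "real^'p^'p" and a :: "'p \<Rightarrow> real^'n"
  assumes pd: "pos_def W"
  shows "sigma_min W * (\<Sum>i\<in>UNIV. (norm (a i))^2) \<le> Bf W a a"
    "Bf W a a \<le> sigma_max W * (\<Sum>i\<in>UNIV. (norm (a i))^2)"
proof -
  define col where "col k = (\<chi> i. a i $ k)" for k
  have n: "(\<Sum>i\<in>UNIV. (norm (a i))^2) = (\<Sum>k\<in>UNIV. col k \<bullet> col k)"
  proof -
    have "(\<Sum>i\<in>UNIV. (norm (a i))^2) = (\<Sum>i\<in>UNIV. \<Sum>k\<in>UNIV. a i $ k * a i $ k)"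
      by (simp add: power2_norm_eq_inner inner_vec_def)
    also have "\<dots> = (\<Sum>k\<in>UNIV. \<Sum>i\<in>UNIV. a i $ k * a i $ k)" by (rule sum.swap)
    also have "\<dots> = (\<Sum>k\<in>UNIV. col k \<bullet> col k)" by (simp add: col_def inner_vec_def)
    finally show ?thesis .
  qed
  have B: "Bf W a a = (\<Sum>k\<in>UNIV. col k \<bullet> (W *v col k))" unfolding col_def by (rule Bf_coords)
  show "sigma_min W * (\<Sum>i\<in>UNIV. (norm (a i))^2) \<le> Bf W a a"
    unfolding n B sum_distrib_left by (intro sum_mono sigma_bounds(2)[OF pd])
  show "Bf W a a \<le> sigma_max W * (\<Sum>i\<in>UNIV. (norm (a i))^2)"
    unfolding n B sum_distrib_left by (intro sum_mono sigma_bounds(3)[OF pd])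
qed

theorem theorem2:
  fixes \<Gamma> :: "real^'p^'p" and r :: "real^'p" and \<Omega> :: "real^'p^'p"
    and Q :: "real \<Rightarrow> real^'n^'n" and x :: "real \<Rightarrow> 'p \<Rightarrow> real^'n"
  assumes "ct_interconnection \<Gamma>" and "ic_connected \<Gamma>"
    and "r v* \<Gamma> = 0" and "r \<bullet> (\<chi> i. 1) = 1"
    and "pos_def \<Omega>"
    and "transpose (\<Gamma> - (\<chi> i j. r$j)) ** \<Omega> + \<Omega> ** (\<Gamma> - (\<chi> i j. r$j)) = - mat 1"
    and "\<forall>T\<ge>0. riemann_integrable_on Q {0..T}"
    and "\<forall>t\<ge>0. pos_semidef (Q t)"
    and "\<forall>t\<ge>0. \<forall>i. ((\<lambda>s. Q s *v (\<Sum>j\<in>UNIV - {i}. \<Gamma>$i$j *\<^sub>R (x s j - x s i)))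
                      has_integral (x t i - x 0 i)) {0..t}"
  shows "\<forall>t\<ge>0. \<forall>i. norm (x t i - (\<Sum>j\<in>UNIV. r$j *\<^sub>R x 0 j))
           \<le> sqrt (sigma_max \<Omega> / sigma_min \<Omega> *
                   (\<Sum>j\<in>UNIV. (norm (x 0 j - (\<Sum>k\<in>UNIV. r$k *\<^sub>R x 0 k)))\<^sup>2))"
proof -
  note ct = assms(1) and rG = assms(3) and r1 = assms(4) and pd = assms(5) and lyap = assms(6)
    and riem = assms(7) and psdQ = assms(8) and H = assms(9)
  define g where "g s i = Q s *v (\<Sum>j\<in>UNIV - {i}. \<Gamma>$i$j *\<^sub>R (x s j - x s i))" for s i
  define xb where "xb = (\<Sum>j\<in>UNIV. r$j *\<^sub>R x 0 j)"
  define e where "e s i = x s i - xb" for s i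
  define A where "A = \<Gamma> - (\<chi> i j. r$j)"
  have sW: "transpose \<Omega> = \<Omega>" using pd by (simp add: pos_def_def sym_matrix_def)
  have sQ: "transpose (Q s) = Q s" if "s \<ge> 0" for s
    using psdQ that by (simp add: pos_semidef_def sym_matrix_def)
  have psd: "v \<bullet> (Q s *v v) \<ge> 0" if "s \<ge> 0" for s v
    using psdQ that by (simp add: pos_semidef_def)
  have g_alt: "g s i = Q s *v (\<Sum>j\<in>UNIV. \<Gamma>$i$j *\<^sub>R x s j)" for s i
    unfolding g_def using rowsum_eq[OF ct, of i "x s"] by simp
  have rsum: "(\<Sum>i\<in>UNIV. r$i) = 1" using r1 by (simp add: inner_vec_def)
  have rG0: "(\<Sum>i\<in>UNIV. r$i * \<Gamma>$i$j) = 0" for j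
  proof -
    have "(r v* \<Gamma>)$j = 0" using rG by simp
    then show ?thesis by (simp add: vector_matrix_mult_def)
  qed
  have Hint: "((\<lambda>s. g s i) has_integral (x t i - x 0 i)) {0..t}" if "t \<ge> 0" for t i
    using H that unfolding g_def by blast
  have cons: "(\<Sum>i\<in>UNIV. r$i *\<^sub>R x t i) = xb" if t0: "t \<ge> 0" for t
  proof -
    have z: "(\<Sum>i\<in>UNIV. r$i *\<^sub>R g s i) = 0" for s
    proof -
      have "(\<Sum>i\<in>UNIV. r$i *\<^sub>R (\<Sum>j\<in>UNIV. \<Gamma>$i$j *\<^sub>R x s j))
          = (\<Sum>i\<in>UNIV. \<Sum>j\<in>UNIV. (r$i * \<Gamma>$i$j) *\<^sub>R x s j)"
        by (simp add: scaleR_sum_right)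
      also have "\<dots> = (\<Sum>j\<in>UNIV. \<Sum>i\<in>UNIV. (r$i * \<Gamma>$i$j) *\<^sub>R x s j)" by (rule sum.swap)
      also have "\<dots> = (\<Sum>j\<in>UNIV. (\<Sum>i\<in>UNIV. r$i * \<Gamma>$i$j) *\<^sub>R x s j)"
        by (simp add: scaleR_sum_left)
      also have "\<dots> = 0" using rG0 by simp
      finally have "(\<Sum>i\<in>UNIV. r$i *\<^sub>R (\<Sum>j\<in>UNIV. \<Gamma>$i$j *\<^sub>R x s j)) = 0" .
      then have "Q s *v (\<Sum>i\<in>UNIV. r$i *\<^sub>R (\<Sum>j\<in>UNIV. \<Gamma>$i$j *\<^sub>R x s j)) = 0" by simp
      then show ?thesis unfolding g_alt by (simp add: matvec_sum matrix_vector_mult_scaleR)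
    qed
    have "((\<lambda>s. \<Sum>i\<in>UNIV. r$i *\<^sub>R g s i) has_integral (\<Sum>i\<in>UNIV. r$i *\<^sub>R (x t i - x 0 i))) {0..t}"
      by (intro has_integral_sum has_integral_cmul Hint[OF t0]) simp
    then have "((\<lambda>s. 0) has_integral (\<Sum>i\<in>UNIV. r$i *\<^sub>R (x t i - x 0 i))) {0..t}"
      using z by simp
    then have "(\<Sum>i\<in>UNIV. r$i *\<^sub>R (x t i - x 0 i)) = 0"
      using has_integral_unique has_integral_0 by blast
    then show ?thesis unfolding xb_def by (simp add: scaleR_diff_right sum_subtractf)
  qed
  have esum: "(\<Sum>j\<in>UNIV. r$j *\<^sub>R e t j) = 0" if "t \<ge> 0" for t
  proof -
    have "(\<Sum>j\<in>UNIV. r$j *\<^sub>R e t j) = (\<Sum>j\<in>UNIV. r$j *\<^sub>R x t j) - (\<Sum>j\<in>UNIV. r$j) *\<^sub>R xb"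
      unfolding e_def by (simp add: scaleR_diff_right sum_subtractf scaleR_sum_left)
    then show ?thesis using cons[OF that] rsum by simp
  qed
  have gA: "g t i = Q t *v (\<Sum>j\<in>UNIV. A$i$j *\<^sub>R e t j)" if "t \<ge> 0" for t i
  proof -
    have "(\<Sum>j\<in>UNIV. A$i$j *\<^sub>R e t j) = (\<Sum>j\<in>UNIV. \<Gamma>$i$j *\<^sub>R e t j) - (\<Sum>j\<in>UNIV. r$j *\<^sub>R e t j)"
      unfolding A_def by (simp add: scaleR_diff_left sum_subtractf)
    also have "\<dots> = (\<Sum>j\<in>UNIV. \<Gamma>$i$j *\<^sub>R e t j)" using esum[OF that] by simp
    also have "\<dots> = (\<Sum>j\<in>UNIV. \<Gamma>$i$j *\<^sub>R x t j) - (\<Sum>j\<in>UNIV. \<Gamma>$i$j) *\<^sub>R xb"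
      unfolding e_def by (simp add: scaleR_diff_right sum_subtractf scaleR_sum_left)
    also have "\<dots> = (\<Sum>j\<in>UNIV. \<Gamma>$i$j *\<^sub>R x t j)" using rowsum_zero[OF ct] by simp
    finally show ?thesis unfolding g_alt by simp
  qed
  have diss: "Bf \<Omega> (e t) (g t) \<le> 0" if "t \<ge> 0" for t
  proof -
    have "(g t) = (\<lambda>j. Q t *v (\<Sum>k\<in>UNIV. A$j$k *\<^sub>R e t k))" using gA[OF that] by auto
    then show ?thesis using dissip[OF sW sQ[OF that] psd[OF that] lyap[folded A_def]] by simp
  qed
  show ?thesis
  proof (intro allI impI)
    fix t :: real and i0 :: 'p
    assume t0: "t \<ge> 0"
    define T where "T = t + 1"
    have T0: "T > 0" and tT: "t \<le> T" using t0 unfolding T_def by auto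
    have gint: "(\<lambda>s. g s i) integrable_on {0..T}" for i
      using Hint[of T i] T0 by (auto simp: integrable_on_def)
    have xint: "x s i = x 0 i + integral {0..s} (\<lambda>u. g u i)" if "s \<in> {0..T}" for s i
      using integral_unique[OF Hint[of s i]] that by simp
    have econt: "continuous_on {0..T} (\<lambda>s. e s i)" for i
    proof -
      have "continuous_on {0..T} (\<lambda>s. x 0 i + integral {0..s} (\<lambda>u. g u i) - xb)"
        by (intro continuous_intros indefinite_integral_continuous_1 gint)
      then show ?thesis unfolding e_def
      proof (rule continuous_on_eq)
        fix s assume "s \<in> {0..T}"
        then show "x 0 i + integral {0..s} (\<lambda>u. g u i) - xb = x s i - xb" using xint[of s i] by simp
      qed
    qed
    have "\<forall>i. \<exists>b. \<forall>s\<in>{0..T}. norm (e s i) \<le> b"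
    proof
      fix i
      have "compact ((\<lambda>s. e s i) ` {0..T})" by (intro compact_continuous_image econt) simp
      then have "bounded ((\<lambda>s. e s i) ` {0..T})" by (rule compact_imp_bounded)
      then show "\<exists>b. \<forall>s\<in>{0..T}. norm (e s i) \<le> b" unfolding bounded_iff by auto
    qed
    then obtain b where b: "\<And>i s. s \<in> {0..T} \<Longrightarrow> norm (e s i) \<le> b i" by metis
    define E where "E = (\<Sum>i\<in>UNIV. \<bar>b i\<bar>)"
    have Ebd: "norm (e s i) \<le> E" if "s \<in> {0..T}" for s i
    proof -
      have "b i \<le> \<bar>b i\<bar>" by simp
      also have "\<bar>b i\<bar> \<le> E" unfolding E_def by (rule member_le_sum) auto
      finally show ?thesis using b[OF that, of i] by simp
    qed
    have E0: "E \<ge> 0" unfolding E_def by (simp add: sum_nonneg)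
    obtain q0 where q0: "\<And>s. s \<in> {0..T} \<Longrightarrow> norm (Q s) \<le> q0"
      using riemann_bounded[OF riem[rule_format, of T] T0] T0 by (metis less_imp_le)
    define q where "q = \<bar>q0\<bar>"
    have qbd: "norm (Q s) \<le> q" if "s \<in> {0..T}" for s using q0[OF that] unfolding q_def by simp
    have q00: "q \<ge> 0" unfolding q_def by simp
    define KG where "KG = (\<Sum>i\<in>UNIV. \<Sum>j\<in>UNIV. \<bar>A$i$j\<bar>)"
    have KG0: "KG \<ge> 0" unfolding KG_def by (simp add: sum_nonneg)
    define G where "G = real (CARD('n) * CARD('n)) * q * (KG * E)"
    have G0: "G \<ge> 0" unfolding G_def using q00 KG0 E0 by simp
    have gbd: "norm (g s i) \<le> G" if s: "s \<in> {0..T}" for s i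
    proof -
      have "norm (\<Sum>j\<in>UNIV. A$i$j *\<^sub>R e s j) \<le> (\<Sum>j\<in>UNIV. \<bar>A$i$j\<bar> * E)"
        by (rule order_trans[OF norm_sum], rule sum_mono) (simp add: Ebd[OF s] mult_left_mono)
      also have "\<dots> \<le> KG * E"
      proof -
        have "(\<Sum>j\<in>UNIV. \<bar>A$i$j\<bar>) \<le> KG" unfolding KG_def
          by (rule member_le_sum[of i]) (auto simp: sum_nonneg)
        then show ?thesis by (simp add: sum_distrib_right[symmetric] mult_right_mono E0)
      qed
      finally have n1: "norm (\<Sum>j\<in>UNIV. A$i$j *\<^sub>R e s j) \<le> KG * E" .
      have "norm (g s i) \<le> real (CARD('n) * CARD('n)) * norm (Q s) * norm (\<Sum>j\<in>UNIV. A$i$j *\<^sub>R e s j)"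
      proof -
        have "g s i = Q s *v (\<Sum>j\<in>UNIV. A$i$j *\<^sub>R e s j)" using gA s by simp
        then show ?thesis using matvec_norm_le[of "Q s" "\<Sum>j\<in>UNIV. A$i$j *\<^sub>R e s j"] by simp
      qed
      also have "\<dots> \<le> real (CARD('n) * CARD('n)) * q * (KG * E)"
        using qbd[OF s] n1 by (intro mult_mono) (auto simp: q00 KG0 E0)
      finally show ?thesis unfolding G_def .
    qed
    show "norm (x t i0 - (\<Sum>j\<in>UNIV. r$j *\<^sub>R x 0 j))
           \<le> sqrt (sigma_max \<Omega> / sigma_min \<Omega> *
                   (\<Sum>j\<in>UNIV. (norm (x 0 j - (\<Sum>k\<in>UNIV. r$k *\<^sub>R x 0 k)))\<^sup>2))"
    proof -
    have dint: "((\<lambda>w. g w i) has_integral (e u i - e s i)) {s..u}"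
      if su: "0 \<le> s" "s \<le> u" "u \<le> T" for s u i
    proof -
      have iu: "(\<lambda>w. g w i) integrable_on {0..u}"
        by (rule integrable_subinterval_real[OF gint[of i]]) (use su in auto)
      have isu: "(\<lambda>w. g w i) integrable_on {s..u}"
        by (rule integrable_subinterval_real[OF gint[of i]]) (use su in auto)
      have c: "integral {0..s} (\<lambda>w. g w i) + integral {s..u} (\<lambda>w. g w i) = integral {0..u} (\<lambda>w. g w i)"
        by (rule Henstock_Kurzweil_Integration.integral_combine[OF _ _ iu]) (use su in auto)
      have "e u i - e s i = x u i - x s i" unfolding e_def by simp
      also have "\<dots> = integral {s..u} (\<lambda>w. g w i)"
        using xint[of u i] xint[of s i] su c by (simp add: algebra_simps)
      finally show ?thesis using isu by (simp add: has_integral_integral)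
    qed
    have lip: "norm (e u i - e s i) \<le> G * (u - s)"
      if su: "0 \<le> s" "s \<le> u" "u \<le> T" for s u i
    proof -
      have "((\<lambda>w. g w i) has_integral (e u i - e s i)) (cbox s u)"
        using dint[OF su] by simp
      moreover have "\<And>w. w \<in> cbox s u \<Longrightarrow> norm (g w i) \<le> G" using gbd su by simp
      ultimately have "norm (e u i - e s i) \<le> G * Henstock_Kurzweil_Integration.content (cbox s u)"
        by (intro has_integral_bound[OF G0]) auto
      then show ?thesis using su by simp
    qed
    define V where "V w = Bf \<Omega> (e w) (e w)" for w
    define KO where "KO = (\<Sum>i\<in>UNIV. \<Sum>j\<in>UNIV. \<bar>\<Omega>$i$j\<bar>)"
    have KO0: "KO \<ge> 0" unfolding KO_def by (simp add: sum_nonneg)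
    define C where "C = 3 * KO * G^2"
    have C0: "C \<ge> 0" unfolding C_def using KO0 by simp
    have incr: "V u - V s \<le> C * (u - s)^2" if su: "0 \<le> s" "s \<le> u" "u \<le> T" for s u
    proof -
      define d where "d i = e u i - e s i" for i
      have eu: "e u = (\<lambda>i. e s i + d i)" unfolding d_def by auto
      have Vu: "V u = V s + 2 * Bf \<Omega> (e s) d + Bf \<Omega> d d"
        unfolding V_def eu Bf_expand[OF sW] by simp
      have dbd: "norm (d i) \<le> G * (u - s)" for i unfolding d_def by (rule lip[OF su])
      have Bdd: "Bf \<Omega> d d \<le> KO * (G * (u - s)) * (G * (u - s))"
        using Bf_bound[of d "G * (u - s)" d "G * (u - s)" \<Omega>, OF dbd dbd] unfolding KO_def by linarith
      have hint: "((\<lambda>w. Bf \<Omega> (e s) (g w)) has_integral Bf \<Omega> (e s) d) {s..u}"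
      proof -
        have inn: "((\<lambda>w. e s i \<bullet> g w j) has_integral (e s i \<bullet> d j)) {s..u}" for i j
          using has_integral_linear[OF dint[OF su, of j] bounded_linear_inner_right[of "e s i"]]
          unfolding d_def by (simp add: o_def)
        show ?thesis unfolding Bf_def
          by (intro has_integral_sum has_integral_mult_right inn) auto
      qed
      have pw: "Bf \<Omega> (e s) (g w) \<le> KO * (G * (u - s)) * G" if w: "w \<in> {s..u}" for w
      proof -
        have w0: "w \<ge> 0" "w \<le> T" using w su by auto
        have "Bf \<Omega> (\<lambda>i. e s i - e w i) (g w) = Bf \<Omega> (e s) (g w) - Bf \<Omega> (e w) (g w)"
          by (simp add: Bf_diff_left)
        then have eq: "Bf \<Omega> (e s) (g w) = Bf \<Omega> (e w) (g w) + Bf \<Omega> (\<lambda>i. e s i - e w i) (g w)" by simp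
        have b1: "norm (e s i - e w i) \<le> G * (u - s)" for i
        proof -
          have "norm (e s i - e w i) = norm (e w i - e s i)" by (rule norm_minus_commute)
          also have "\<dots> \<le> G * (w - s)" using lip[of s w i] w su by auto
          also have "\<dots> \<le> G * (u - s)" using w G0 by (intro mult_left_mono) auto
          finally show ?thesis .
        qed
        have b2: "norm (g w j) \<le> G" for j using gbd w0 by simp
        have "Bf \<Omega> (\<lambda>i. e s i - e w i) (g w) \<le> KO * (G * (u - s)) * G"
          using Bf_bound[of "\<lambda>i. e s i - e w i" "G * (u - s)" "g w" G \<Omega>, OF b1 b2] unfolding KO_def by linarith
        then show ?thesis using eq diss[OF w0(1)] by linarith
      qed
      have "Bf \<Omega> (e s) d \<le> Henstock_Kurzweil_Integration.content {s..u} *\<^sub>R (KO * (G * (u - s)) * G)"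
        by (rule has_integral_le[OF hint has_integral_const_real pw])
      then have "Bf \<Omega> (e s) d \<le> (u - s) * (KO * (G * (u - s)) * G)" using su by simp
      then show ?thesis using Vu Bdd unfolding C_def by (simp add: power2_eq_square algebra_simps)
    qed
    have tele: "V t \<le> V 0 + C * t^2 / real n" if n1: "n \<ge> 1" for n :: nat
    proof -
      define h where "h = t / real n"
      have h0: "h \<ge> 0" unfolding h_def using t0 by simp
      have "k \<le> n \<Longrightarrow> V (real k * h) \<le> V 0 + real k * C * h^2" for k
      proof (induction k)
        case 0 then show ?case by simp
      next
        case (Suc k)
        have "real (Suc k) * h \<le> real n * h" using Suc.prems h0 by (intro mult_right_mono) auto
        moreover have "real n * h = t" unfolding h_def using n1 by simp
        ultimately have kn: "real (Suc k) * h \<le> t" by simp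
        have "V (real (Suc k) * h) - V (real k * h) \<le> C * (real (Suc k) * h - real k * h)^2"
          using kn tT h0 by (intro incr) (auto simp: algebra_simps)
        also have "(real (Suc k) * h - real k * h) = h" by (simp add: algebra_simps)
        finally show ?case using Suc by (simp add: algebra_simps)
      qed
      from this[of n] have "V (real n * h) \<le> V 0 + real n * C * h^2" by simp
      moreover have "real n * h = t" unfolding h_def using n1 by simp
      moreover have "real n * C * h^2 = C * t^2 / real n" unfolding h_def using n1
        by (simp add: power2_eq_square field_simps)
      ultimately show ?thesis by simp
    qed
    have VV: "V t \<le> V 0"
    proof (rule ccontr)
      assume "\<not> V t \<le> V 0"
      then have dpos: "V t - V 0 > 0" by simp
      obtain n :: nat where n: "C * t^2 / (V t - V 0) < real n" using reals_Archimedean2 by blast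
      define m where "m = max n 1"
      have m1: "m \<ge> 1" unfolding m_def by simp
      have "C * t^2 / (V t - V 0) < real m" using n unfolding m_def by linarith
      then have "C * t^2 < real m * (V t - V 0)" using dpos by (simp add: divide_less_eq)
      then have "C * t^2 / real m < V t - V 0" using m1 by (simp add: divide_less_eq mult.commute)
      then show False using tele[OF m1] by linarith
    qed
    have smin: "sigma_min \<Omega> > 0" by (rule sigma_bounds(1)[OF pd])
    have "sigma_min \<Omega> * (norm (e t i0))^2 \<le> sigma_min \<Omega> * (\<Sum>j\<in>UNIV. (norm (e t j))^2)"
      using smin by (intro mult_left_mono member_le_sum) auto
    also have "\<dots> \<le> V t" unfolding V_def by (rule Bf_sandwich(1)[OF pd])
    also have "\<dots> \<le> V 0" by (rule VV)
    also have "\<dots> \<le> sigma_max \<Omega> * (\<Sum>j\<in>UNIV. (norm (e 0 j))^2)" unfolding V_def by (rule Bf_sandwich(2)[OF pd])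
    finally have "(norm (e t i0))^2 \<le> sigma_max \<Omega> / sigma_min \<Omega> * (\<Sum>j\<in>UNIV. (norm (e 0 j))^2)"
      using smin by (simp add: field_simps)
    then have "sqrt ((norm (e t i0))^2) \<le> sqrt (sigma_max \<Omega> / sigma_min \<Omega> * (\<Sum>j\<in>UNIV. (norm (e 0 j))^2))"
      by (rule real_sqrt_le_mono)
    then show ?thesis unfolding e_def xb_def by simp
    qed
  qed
qed

end
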